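(* Let $N\ge 2$ and let $(\nu_r^{(1:N)})_{r\ge1}$ be vectors of non-negative integers with $\sum_i \nu_r^{(i)} = N$, with $c_N$, $D_N$, $\tau_N$ as defined below, and assume $\tau_N(u)<\infty$ for all $u\ge0$. Fix $t > 0$ and $l \in \mathbb{N}$. Then for any constant $B > 0$, $$\sum_{\substack{s_1,\dots,s_l=1\\\text{all distinct}}}^{\tau_N(t)}\prod_{j=1}^l\big[c_N(s_j) - BD_N(s_j)\big] \geq \sum_{\substack{s_1,\dots,s_l=1\\\text{all distinct}}}^{\tau_N(t)}\prod_{j=1}^l c_N(s_j) - \Bigg(\sum_{s=1}^{\tau_N(t)} D_N(s)\Bigg)(t+1)^{l-1}(1+B)^l.$$
   Context: $(x)_k$ is the falling factorial. $c_N(r) := \frac{1}{(N)_2}\sum_{i=1}^N(\nu_r^{(i)})_2$; $D_N(r) := \frac{1}{N(N)_2}\sum_{i=1}^N(\nu_r^{(i)})_2\{\nu_r^{(i)} + \frac1N\sum_{j\ne i}(\nu_r^{(j)})^2\}$; $\tau_N(u) := \inf\{s\in\{0,1,2,\dots\} : \sum_{r=1}^s c_N(r) \ge u\}$. *)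

theory Defs
  imports Complex_Main "HOL-Library.FuncSet"
begin

definition ff2 :: "real \<Rightarrow> real" where
  "ff2 x = x * (x - 1)"

text \<open>nu r i is the i-th entry (i = 1..N) of the r-th offspring vector (r \<ge> 1).\<close>
definition cN :: "nat \<Rightarrow> (nat \<Rightarrow> nat \<Rightarrow> nat) \<Rightarrow> nat \<Rightarrow> real" where
  "cN N nu r = (\<Sum>i=1..N. ff2 (real (nu r i))) / ff2 (real N)"

definition DN :: "nat \<Rightarrow> (nat \<Rightarrow> nat \<Rightarrow> nat) \<Rightarrow> nat \<Rightarrow> real" where
  "DN N nu r = (\<Sum>i=1..N. ff2 (real (nu r i)) *
       (real (nu r i) + (1 / real N) * (\<Sum>j\<in>{1..N} - {i}. (real (nu r j))^2)))
     / (real N * ff2 (real N))"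

definition tauN :: "nat \<Rightarrow> (nat \<Rightarrow> nat \<Rightarrow> nat) \<Rightarrow> real \<Rightarrow> nat" where
  "tauN N nu u = (LEAST s. (\<Sum>r=1..s. cN N nu r) \<ge> u)"

definition distinct_tuples :: "nat \<Rightarrow> nat \<Rightarrow> (nat \<Rightarrow> nat) set" where
  "distinct_tuples l m = {s. s \<in> {0..<l} \<rightarrow>\<^sub>E {1..m} \<and> inj_on s {0..<l}}"

end

theory Submission
  imports Defs
begin

lemma abs_prod_bound:
  fixes c d :: "nat \<Rightarrow> real"
  assumes "\<And>j. j < l \<Longrightarrow> 0 \<le> d j \<and> d j \<le> c j" and "B > 0"
  shows "\<bar>\<Prod>j<l. c j - B * d j\<bar> \<le> (1+B)^l * (\<Prod>j<l. c j)"
proof -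
  have "\<bar>\<Prod>j<l. c j - B * d j\<bar> = (\<Prod>j<l. \<bar>c j - B * d j\<bar>)" by (simp add: abs_prod)
  also have "\<dots> \<le> (\<Prod>j<l. (1+B) * c j)"
  proof (rule prod_mono)
    fix j assume "j \<in> {..<l}"
    then have "0 \<le> d j" "d j \<le> c j" using assms(1) by auto
    then show "0 \<le> \<bar>c j - B * d j\<bar> \<and> \<bar>c j - B * d j\<bar> \<le> (1 + B) * c j"
    proof -
      have "B * d j \<le> B * c j" using \<open>d j \<le> c j\<close> assms(2) by (simp add: mult_left_mono)
      moreover have "0 \<le> B * d j" using \<open>0 \<le> d j\<close> assms(2) by simp
      moreover have "0 \<le> c j" using \<open>0 \<le> d j\<close> \<open>d j \<le> c j\<close> by simp
      ultimately show ?thesis by (simp add: abs_le_iff distrib_right)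
    qed
  qed
  also have "\<dots> = (1+B)^l * (\<Prod>j<l. c j)" by (simp add: prod.distrib)
  finally show ?thesis .
qed

lemma telescope:
  fixes c d :: "nat \<Rightarrow> real"
  assumes "\<And>j. j < l \<Longrightarrow> 0 \<le> d j \<and> d j \<le> c j" and "B > 0"
  shows "(\<Prod>j<l. c j) - (\<Prod>j<l. c j - B * d j)
     \<le> (\<Sum>k<l. B * (1+B)^k * d k * (\<Prod>j\<in>{..<l}-{k}. c j))"
  using assms(1)
proof (induction l)
  case 0
  then show ?case by simp
next
  case (Suc l)
  have hyp: "\<And>j. j < l \<Longrightarrow> 0 \<le> d j \<and> d j \<le> c j" using Suc.prems by auto
  have IH: "(\<Prod>j<l. c j) - (\<Prod>j<l. c j - B * d j)
     \<le> (\<Sum>k<l. B * (1+B)^k * d k * (\<Prod>j\<in>{..<l}-{k}. c j))" using Suc.IH[OF hyp] .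
  define P where "P = (\<Prod>j<l. c j)"
  define Q where "Q = (\<Prod>j<l. c j - B * d j)"
  have cl: "0 \<le> d l" "d l \<le> c l" using Suc.prems by auto
  have Qb: "\<bar>Q\<bar> \<le> (1+B)^l * P" unfolding Q_def P_def by (rule abs_prod_bound[OF hyp assms(2)])
  have eq: "(\<Prod>j<Suc l. c j) - (\<Prod>j<Suc l. c j - B * d j) = (P - Q) * c l + Q * (B * d l)"
    by (simp add: P_def Q_def algebra_simps)
  have "(P - Q) * c l \<le> (\<Sum>k<l. B * (1+B)^k * d k * (\<Prod>j\<in>{..<l}-{k}. c j)) * c l"
    using IH cl by (intro mult_right_mono) (auto simp: P_def Q_def)
  also have "\<dots> = (\<Sum>k<l. B * (1+B)^k * d k * (\<Prod>j\<in>{..<Suc l}-{k}. c j))"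
  proof -
    have "\<And>k. k < l \<Longrightarrow> (\<Prod>j\<in>{..<Suc l}-{k}. c j) = (\<Prod>j\<in>{..<l}-{k}. c j) * c l"
    proof -
      fix k assume "k < l"
      then have "{..<Suc l}-{k} = insert l ({..<l}-{k})" by auto
      then show "(\<Prod>j\<in>{..<Suc l}-{k}. c j) = (\<Prod>j\<in>{..<l}-{k}. c j) * c l"
        by (simp add: mult.commute)
    qed
    then show ?thesis by (simp add: sum_distrib_right mult.assoc)
  qed
  finally have A: "(P - Q) * c l \<le> (\<Sum>k<l. B * (1+B)^k * d k * (\<Prod>j\<in>{..<Suc l}-{k}. c j))" .
  have "Q * (B * d l) \<le> \<bar>Q\<bar> * (B * d l)"
    using cl assms(2) by (intro mult_right_mono) auto
  also have "\<dots> \<le> (1+B)^l * P * (B * d l)"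
    using cl assms(2) Qb by (intro mult_right_mono) auto
  also have "\<dots> = B * (1+B)^l * d l * (\<Prod>j\<in>{..<Suc l}-{l}. c j)"
  proof -
    have "{..<Suc l}-{l} = {..<l}" by auto
    then show ?thesis by (simp add: P_def)
  qed
  finally have Bq: "Q * (B * d l) \<le> B * (1+B)^l * d l * (\<Prod>j\<in>{..<Suc l}-{l}. c j)" .
  show ?case using A Bq eq by simp
qed

lemma geom:
  fixes B :: real
  shows "(\<Sum>k<l. B * (1+B)^k) = (1+B)^l - 1"
  by (induction l) (auto simp: algebra_simps)

lemma sum_PiE_bound:
  fixes c d :: "nat \<Rightarrow> real" and R :: "nat set" and DT :: "(nat \<Rightarrow> nat) set"
  assumes fin: "finite R" and sub: "DT \<subseteq> PiE {..<l} (\<lambda>_. R)"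
    and c0: "\<And>r. 0 \<le> c r" and d0: "\<And>r. 0 \<le> d r" and k: "k < l"
  shows "(\<Sum>s\<in>DT. d (s k) * (\<Prod>j\<in>{..<l}-{k}. c (s j))) \<le> sum d R * (sum c R)^(l-1)"
proof -
  define f where "f = (\<lambda>j r. if j = k then d r else c r)"
  have pw: "\<And>s. d (s k) * (\<Prod>j\<in>{..<l}-{k}. c (s j)) = (\<Prod>j<l. f j (s j))"
  proof -
    fix s :: "nat \<Rightarrow> nat"
    have "(\<Prod>j<l. f j (s j)) = f k (s k) * (\<Prod>j\<in>{..<l}-{k}. f j (s j))"
      using k by (simp add: prod.remove)
    also have "(\<Prod>j\<in>{..<l}-{k}. f j (s j)) = (\<Prod>j\<in>{..<l}-{k}. c (s j))"
      by (rule prod.cong) (auto simp: f_def)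
    finally show "d (s k) * (\<Prod>j\<in>{..<l}-{k}. c (s j)) = (\<Prod>j<l. f j (s j))"
      by (simp add: f_def)
  qed
  have "(\<Sum>s\<in>DT. d (s k) * (\<Prod>j\<in>{..<l}-{k}. c (s j))) = (\<Sum>s\<in>DT. \<Prod>j<l. f j (s j))"
    using pw by simp
  also have "\<dots> \<le> (\<Sum>s\<in>PiE {..<l} (\<lambda>_. R). \<Prod>j<l. f j (s j))"
  proof (rule sum_mono2)
    show "finite (PiE {..<l} (\<lambda>_. R))" using fin by (simp add: finite_PiE)
    show "DT \<subseteq> PiE {..<l} (\<lambda>_. R)" by (rule sub)
    show "\<And>b. b \<in> PiE {..<l} (\<lambda>_. R) - DT \<Longrightarrow> 0 \<le> (\<Prod>j<l. f j (b j))"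
      by (intro prod_nonneg) (simp add: f_def c0 d0)
  qed
  also have "\<dots> = (\<Prod>j<l. \<Sum>r\<in>R. f j r)"
    by (rule prod_sum_PiE[symmetric]) (auto simp: fin)
  also have "\<dots> = (\<Sum>r\<in>R. f k r) * (\<Prod>j\<in>{..<l}-{k}. \<Sum>r\<in>R. f j r)"
    using k by (simp add: prod.remove)
  also have "(\<Prod>j\<in>{..<l}-{k}. \<Sum>r\<in>R. f j r) = (\<Prod>j\<in>{..<l}-{k}. sum c R)"
    by (rule prod.cong) (auto simp: f_def)
  also have "\<dots> = (sum c R)^(l-1)" using k by simp
  finally show ?thesis by (simp add: f_def)
qed

lemma main_abs:
  fixes c d :: "nat \<Rightarrow> real" and R :: "nat set" and DT :: "(nat \<Rightarrow> nat) set" and B T :: real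
  assumes fin: "finite R" and sub: "DT \<subseteq> PiE {..<l} (\<lambda>_. R)"
    and c0: "\<And>r. 0 \<le> c r" and d0: "\<And>r. 0 \<le> d r" and dc: "\<And>r. r \<in> R \<Longrightarrow> d r \<le> c r"
    and B: "B > 0" and T: "sum c R \<le> T"
  shows "(\<Sum>s\<in>DT. \<Prod>j<l. c (s j) - B * d (s j))
     \<ge> (\<Sum>s\<in>DT. \<Prod>j<l. c (s j)) - sum d R * T^(l-1) * (1+B)^l"
proof -
  have finDT: "finite DT" using finite_subset[OF sub] fin by (simp add: finite_PiE)
  have Sd: "0 \<le> sum d R" using d0 by (simp add: sum_nonneg)
  have Sc: "0 \<le> sum c R" using c0 by (simp add: sum_nonneg)
  have "(\<Sum>s\<in>DT. \<Prod>j<l. c (s j)) - (\<Sum>s\<in>DT. \<Prod>j<l. c (s j) - B * d (s j))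
     = (\<Sum>s\<in>DT. (\<Prod>j<l. c (s j)) - (\<Prod>j<l. c (s j) - B * d (s j)))"
    by (simp add: sum_subtractf)
  also have "\<dots> \<le> (\<Sum>s\<in>DT. \<Sum>k<l. B * (1+B)^k * d (s k) * (\<Prod>j\<in>{..<l}-{k}. c (s j)))"
  proof (rule sum_mono)
    fix s assume "s \<in> DT"
    then have "\<And>j. j < l \<Longrightarrow> s j \<in> R" using sub by (auto simp: PiE_def Pi_def)
    then have "\<And>j. j < l \<Longrightarrow> 0 \<le> d (s j) \<and> d (s j) \<le> c (s j)" using d0 dc by auto
    from telescope[of l "\<lambda>j. d (s j)" "\<lambda>j. c (s j)", OF this B]
    show "(\<Prod>j<l. c (s j)) - (\<Prod>j<l. c (s j) - B * d (s j))
      \<le> (\<Sum>k<l. B * (1+B)^k * d (s k) * (\<Prod>j\<in>{..<l}-{k}. c (s j)))" .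
  qed
  also have "\<dots> = (\<Sum>k<l. B * (1+B)^k * (\<Sum>s\<in>DT. d (s k) * (\<Prod>j\<in>{..<l}-{k}. c (s j))))"
    by (subst sum.swap) (simp add: sum_distrib_left mult.assoc)
  also have "\<dots> \<le> (\<Sum>k<l. B * (1+B)^k * (sum d R * T^(l-1)))"
  proof (rule sum_mono)
    fix k assume k: "k \<in> {..<l}"
    have "(\<Sum>s\<in>DT. d (s k) * (\<Prod>j\<in>{..<l}-{k}. c (s j))) \<le> sum d R * (sum c R)^(l-1)"
      using k by (intro sum_PiE_bound[OF fin sub c0 d0]) auto
    also have "\<dots> \<le> sum d R * T^(l-1)"
      using Sd Sc T by (intro mult_left_mono power_mono) auto
    finally show "B * (1+B)^k * (\<Sum>s\<in>DT. d (s k) * (\<Prod>j\<in>{..<l}-{k}. c (s j)))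
        \<le> B * (1+B)^k * (sum d R * T^(l-1))"
      using B by (intro mult_left_mono) auto
  qed
  also have "\<dots> = ((1+B)^l - 1) * (sum d R * T^(l-1))"
    by (simp add: sum_distrib_right[symmetric] geom)
  also have "\<dots> \<le> (1+B)^l * (sum d R * T^(l-1))"
    using Sd Sc T by (intro mult_right_mono) auto
  finally show ?thesis by (simp add: mult_ac)
qed

lemma ff2_nat_nonneg: "0 \<le> ff2 (real n)"
  by (cases n) (auto simp: ff2_def)

lemma sum_sq_le: "finite A \<Longrightarrow> (\<Sum>j\<in>A. (f j :: nat)^2) \<le> (\<Sum>j\<in>A. f j)^2"
proof (induction A rule: finite_induct)
  case empty then show ?case by simp
next
  case (insert x A)
  then show ?case by (simp add: power2_eq_square algebra_simps)
qed

lemma cN_nonneg: "N \<ge> 2 \<Longrightarrow> 0 \<le> cN N nu r"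
  unfolding cN_def
  by (intro divide_nonneg_nonneg sum_nonneg ff2_nat_nonneg)

lemma DN_nonneg: "N \<ge> 2 \<Longrightarrow> 0 \<le> DN N nu r"
  unfolding DN_def
  by (intro divide_nonneg_nonneg sum_nonneg mult_nonneg_nonneg ff2_nat_nonneg add_nonneg_nonneg)
     (auto simp: ff2_def)

lemma cN_le1:
  assumes N: "N \<ge> 2" and S: "(\<Sum>i=1..N. nu r i) = N"
  shows "cN N nu r \<le> 1"
proof -
  have "(\<Sum>i=1..N. (nu r i)^2) \<le> N^2" using sum_sq_le[of "{1..N}" "nu r"] S by simp
  then have A: "(\<Sum>i=1..N. real (nu r i)^2) \<le> real N ^ 2"
    by (metis (mono_tags, lifting) of_nat_le_iff of_nat_power of_nat_sum sum.cong)
  have B: "(\<Sum>i=1..N. real (nu r i)) = real N" using S by (metis of_nat_sum)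
  have "(\<Sum>i=1..N. ff2 (real (nu r i))) = (\<Sum>i=1..N. real (nu r i)^2) - (\<Sum>i=1..N. real (nu r i))"
    by (simp add: ff2_def sum_subtractf power2_eq_square algebra_simps)
  also have "\<dots> \<le> ff2 (real N)" using A B by (simp add: ff2_def power2_eq_square algebra_simps)
  finally have "(\<Sum>i=1..N. ff2 (real (nu r i))) \<le> ff2 (real N)" .
  moreover have "ff2 (real N) > 0" using N by (simp add: ff2_def)
  ultimately show ?thesis unfolding cN_def by simp
qed

lemma DN_le_cN:
  assumes N: "N \<ge> 2" and S: "(\<Sum>i=1..N. nu r i) = N"
  shows "DN N nu r \<le> cN N nu r"
proof -
  have key: "real (nu r i) + (1 / real N) * (\<Sum>j\<in>{1..N} - {i}. (real (nu r j))^2) \<le> real N"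
    if i: "i \<in> {1..N}" for i
  proof -
    have sr: "(\<Sum>j\<in>{1..N}-{i}. nu r j) + nu r i = N"
      using S i by (metis add.commute finite_atLeastAtMost sum.remove)
    have "(\<Sum>j\<in>{1..N}-{i}. (nu r j)^2) \<le> (\<Sum>j\<in>{1..N}-{i}. nu r j)^2"
      by (rule sum_sq_le) simp
    then have R0: "real (\<Sum>j\<in>{1..N}-{i}. (nu r j)^2) \<le> real ((\<Sum>j\<in>{1..N}-{i}. nu r j)^2)"
      by (simp only: of_nat_le_iff)
    then have Sq: "(\<Sum>j\<in>{1..N}-{i}. (real (nu r j))^2) \<le> (real N - real (nu r i))^2"
    proof -
      have e1: "real (\<Sum>j\<in>{1..N}-{i}. nu r j) = real N - real (nu r i)"
        using sr by (metis add_diff_cancel_right' of_nat_add)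
      have e2: "real (\<Sum>j\<in>{1..N}-{i}. (nu r j)^2) = (\<Sum>j\<in>{1..N}-{i}. (real (nu r j))^2)"
        by simp
      have e3: "real ((\<Sum>j\<in>{1..N}-{i}. nu r j)^2) = (real N - real (nu r i))^2"
        by (simp only: of_nat_power e1)
      show ?thesis using R0 e2 e3 by linarith
    qed
    define x where "x = real (nu r i)"
    have x0: "0 \<le> x" "x \<le> real N" using sr by (auto simp: x_def)
    have "(real N - x)^2 \<le> real N * (real N - x)"
      using x0 by (simp add: power2_eq_square mult_right_mono)
    then have "(\<Sum>j\<in>{1..N}-{i}. (real (nu r j))^2) \<le> real N * (real N - x)"
      using Sq unfolding x_def by linarith
    then have "(1 / real N) * (\<Sum>j\<in>{1..N}-{i}. (real (nu r j))^2) \<le> real N - x"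
      using N by (simp add: field_simps)
    then show ?thesis by (simp add: x_def)
  qed
  have "(\<Sum>i=1..N. ff2 (real (nu r i)) *
       (real (nu r i) + (1 / real N) * (\<Sum>j\<in>{1..N} - {i}. (real (nu r j))^2)))
      \<le> (\<Sum>i=1..N. ff2 (real (nu r i)) * real N)"
    by (intro sum_mono mult_left_mono key ff2_nat_nonneg)
  also have "\<dots> = real N * (\<Sum>i=1..N. ff2 (real (nu r i)))" by (simp add: sum_distrib_left mult.commute)
  finally have L: "(\<Sum>i=1..N. ff2 (real (nu r i)) *
       (real (nu r i) + (1 / real N) * (\<Sum>j\<in>{1..N} - {i}. (real (nu r j))^2)))
      \<le> real N * (\<Sum>i=1..N. ff2 (real (nu r i)))" .
  have pos: "real N * ff2 (real N) > 0" using N by (simp add: ff2_def)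
  show ?thesis unfolding DN_def cN_def
    using divide_right_mono[OF L less_imp_le[OF pos]] pos N by simp
qed

lemma sum_cN_tau:
  assumes N: "N \<ge> 2" and S: "\<And>r. r \<ge> 1 \<Longrightarrow> (\<Sum>i=1..N. nu r i) = N"
    and t: "t > 0"
  shows "(\<Sum>r=1..tauN N nu t. cN N nu r) \<le> t + 1"
proof (cases "tauN N nu t")
  case 0
  then show ?thesis using t by simp
next
  case (Suc m)
  have "m < tauN N nu t" using Suc by simp
  then have "\<not> (\<Sum>r=1..m. cN N nu r) \<ge> t"
    unfolding tauN_def by (rule not_less_Least)
  moreover have "cN N nu (Suc m) \<le> 1" by (rule cN_le1[OF N]) (rule S, simp)
  ultimately show ?thesis using Suc by simp
qed

theorem lemma6:
  fixes N :: nat and nu :: "nat \<Rightarrow> nat \<Rightarrow> nat" and t B :: real and l :: nat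
  assumes "N \<ge> 2"
    and "\<And>r. r \<ge> 1 \<Longrightarrow> (\<Sum>i=1..N. nu r i) = N"
    and "\<And>u. u \<ge> 0 \<Longrightarrow> \<exists>s. (\<Sum>r=1..s. cN N nu r) \<ge> u"
    and "t > 0" and "l \<ge> 1" and "B > 0"
  shows "(\<Sum>s\<in>distinct_tuples l (tauN N nu t). \<Prod>j<l. cN N nu (s j) - B * DN N nu (s j))
     \<ge> (\<Sum>s\<in>distinct_tuples l (tauN N nu t). \<Prod>j<l. cN N nu (s j))
       - (\<Sum>s=1..tauN N nu t. DN N nu s) * (t + 1) ^ (l - 1) * (1 + B) ^ l"
proof (rule main_abs)
  show "finite {1..tauN N nu t}" by simp
  show "distinct_tuples l (tauN N nu t) \<subseteq> PiE {..<l} (\<lambda>_. {1..tauN N nu t})"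
    unfolding distinct_tuples_def by (auto simp: atLeast0LessThan)
  show "\<And>r. 0 \<le> cN N nu r" using assms(1) by (rule cN_nonneg)
  show "\<And>r. 0 \<le> DN N nu r" using assms(1) by (rule DN_nonneg)
  show "\<And>r. r \<in> {1..tauN N nu t} \<Longrightarrow> DN N nu r \<le> cN N nu r"
    using assms(1,2) DN_le_cN by auto
  show "B > 0" by (rule assms(6))
  show "(\<Sum>r=1..tauN N nu t. cN N nu r) \<le> t + 1"
    using assms(1,2,4) by (rule sum_cN_tau)
qed

end
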